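(* Let $n\ge3$ and consider the cycle graph $C_n$. For $i\in[n]$ let $\mathrm{Inc}_i^n:=i(i+1)\cdots n\,12\cdots(i-1)$. (1) If $i\ge4$, then for every $j\in[n]$: $B(j,\mathrm{Inc}_i^n,C_n)=i(i+1)\cdots j$ if $j\ge i$; $=n\,12\cdots j$ if $3\le j\le i-1$; $=12$ if $j=2$; $=1$ if $j=1$. Consequently the number of $C_n$-friendship parking functions with outcome $\mathrm{Inc}_i^n$ is $(n-i+1)!\,i!/3$. (2) If $i\le3$, then for every $j\in[n]$: $B(j,\mathrm{Inc}_i^n,C_n)=i\cdots j$ if $j\ge i$, and $=1\cdots j$ if $j\le i-1$. Consequently the number of $C_n$-friendship parking functions with outcome $\mathrm{Inc}_i^n$ is $(n+1-i)!\,(i-1)!$.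
   Context: $C_n$ ($n\ge3$) is the cycle graph with vertex set $[n]$ and edges $\{i,i+1\}$ for $i\in[n-1]$ and $\{n,1\}$. Permutations are in one-line notation. Friendship parking process for a graph $G$ on $[n]$ and a parking preference $p\in[n]^n$: cars $1,\dots,n$ enter in order into spots $1,\dots,n$ (initially empty); spot $k$ is available for car $i$ if it is unoccupied when $i$ enters and each of spots $k-1,k+1$ is unoccupied or occupied by a car adjacent to $i$ in $G$ (spots $0,n+1$ count as unoccupied); car $i$ parks in the first available spot $k\ge p_i$, failing otherwise. $p$ is a $G$-friendship parking function if all cars park; its outcome is the permutation $\pi$ with $\pi_k$ the car in spot $k$ at the end. Blockers: for a permutation $\pi$ that is a Hamiltonian path of $G$ (i.e. $\{\pi_k,\pi_{k+1}\}$ is an edge for all $k$) and $i\in[n]$, $j=\pi_k$ is a blocker for $i$ if (1) $j\le i$, or (2) $j>i$ and some $\ell\in\{\pi_{k-1},\pi_{k+1}\}$ satisfies $\ell<i$ and $\ell$ not adjacent to $i$ in $G$. The blocking sequence $B(i,\pi,G)$ is the longest contiguous block of $\pi$ ending at $i$ consisting of blockers for $i$. *)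

theory Defs
  imports Complex_Main
begin

definition cyc :: "nat \<Rightarrow> nat \<Rightarrow> nat \<Rightarrow> bool" where
  "cyc n a b \<longleftrightarrow> a \<in> {1..n} \<and> b \<in> {1..n} \<and>
     (b = a + 1 \<or> a = b + 1 \<or> (a = n \<and> b = 1) \<or> (a = 1 \<and> b = n))"

text \<open>A parking configuration: occ k is the car in spot k, 0 meaning unoccupied
  (cars are 1..n; spots 0 and n+1 are never occupied).\<close>
definition available :: "(nat \<Rightarrow> nat \<Rightarrow> bool) \<Rightarrow> nat \<Rightarrow> (nat \<Rightarrow> nat) \<Rightarrow> nat \<Rightarrow> nat \<Rightarrow> bool" where
  "available G n occ i k \<longleftrightarrow> k \<in> {1..n} \<and> occ k = 0 \<and>
     (occ (k - 1) = 0 \<or> G i (occ (k - 1))) \<and>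
     (occ (k + 1) = 0 \<or> G i (occ (k + 1)))"

text \<open>Run the friendship parking process for the first m cars; the preference
  of car c is p ! (c - 1). None means some car failed to park.\<close>
fun park :: "(nat \<Rightarrow> nat \<Rightarrow> bool) \<Rightarrow> nat \<Rightarrow> nat list \<Rightarrow> nat \<Rightarrow> (nat \<Rightarrow> nat) option" where
  "park G n p 0 = Some (\<lambda>_. 0)"
| "park G n p (Suc m) =
     (case park G n p m of
        None \<Rightarrow> None
      | Some occ \<Rightarrow>
          (if \<exists>k. p ! m \<le> k \<and> available G n occ (Suc m) k
           then Some (occ((LEAST k. p ! m \<le> k \<and> available G n occ (Suc m) k) := Suc m))
           else None))"

definition is_friendship_pf :: "(nat \<Rightarrow> nat \<Rightarrow> bool) \<Rightarrow> nat \<Rightarrow> nat list \<Rightarrow> bool" where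
  "is_friendship_pf G n p \<longleftrightarrow> length p = n \<and> set p \<subseteq> {1..n} \<and> park G n p n \<noteq> None"

definition outcome :: "(nat \<Rightarrow> nat \<Rightarrow> bool) \<Rightarrow> nat \<Rightarrow> nat list \<Rightarrow> nat list" where
  "outcome G n p = map (the (park G n p n)) [1..<n+1]"

definition is_blocker :: "(nat \<Rightarrow> nat \<Rightarrow> bool) \<Rightarrow> nat list \<Rightarrow> nat \<Rightarrow> nat \<Rightarrow> bool" where
  "is_blocker G \<pi> i k \<longleftrightarrow> k < length \<pi> \<and>
     (\<pi> ! k \<le> i \<or>
      (\<pi> ! k > i \<and>
       ((0 < k \<and> \<pi> ! (k - 1) < i \<and> \<not> G i (\<pi> ! (k - 1))) \<or>
        (k + 1 < length \<pi> \<and> \<pi> ! (k + 1) < i \<and> \<not> G i (\<pi> ! (k + 1))))))"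

text \<open>Blocking sequence: the longest contiguous block of pi ending at i
  consisting of blockers for i.\<close>
definition blocking_seq :: "nat \<Rightarrow> nat list \<Rightarrow> (nat \<Rightarrow> nat \<Rightarrow> bool) \<Rightarrow> nat list" where
  "blocking_seq i \<pi> G =
     (let q = the_elem {k. k < length \<pi> \<and> \<pi> ! k = i};
          m = (LEAST m. \<forall>k. m \<le> k \<and> k \<le> q \<longrightarrow> is_blocker G \<pi> i k)
      in drop m (take (q + 1) \<pi>))"

definition Inc :: "nat \<Rightarrow> nat \<Rightarrow> nat list" where
  "Inc n i = [i..<n+1] @ [1..<i]"

end

theory Submission
  imports Defs
begin


lemma park_Suc_Some:
  assumes "park G n p (Suc m) = Some Y"
  shows "\<exists>X k. park G n p m = Some X \<and> available G n X (Suc m) k \<and> X k = 0 \<and> k \<in> {1..n} \<and> Y = X(k := Suc m)"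
proof -
  obtain X where X: "park G n p m = Some X"
    using assms by (cases "park G n p m") auto
  have ex: "\<exists>k. p ! m \<le> k \<and> available G n X (Suc m) k"
    using assms X by (auto split: if_splits)
  define L where "L = (LEAST k. p ! m \<le> k \<and> available G n X (Suc m) k)"
  have "available G n X (Suc m) L" using LeastI_ex[OF ex] unfolding L_def by blast
  moreover have "Y = X(L := Suc m)" using assms X ex unfolding L_def by auto
  ultimately show ?thesis using X unfolding available_def by blast
qed

lemma park_range:
  "park G n p m = Some X \<Longrightarrow> X k \<le> m \<and> (X k \<noteq> 0 \<longrightarrow> k \<in> {1..n})"
proof (induction m arbitrary: X)
  case 0 then show ?case by auto
next
  case (Suc m)
  from park_Suc_Some[OF Suc.prems] obtain Y j where
    "park G n p m = Some Y" "Y j = 0" "j \<in> {1..n}" "X = Y(j := Suc m)" by blast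
  with Suc.IH[of Y] show ?case by auto
qed

lemma park_restrict:
  "park G n p (m + d) = Some Z \<Longrightarrow> park G n p m = Some X \<Longrightarrow> X = (\<lambda>k. if Z k \<le> m then Z k else 0)"
proof (induction d arbitrary: Z)
  case 0
  then have "X = Z" by simp
  then show ?case using park_range[OF 0(2)] by (auto simp: fun_eq_iff)
next
  case (Suc d)
  from park_Suc_Some[of G n p "m+d" Z] Suc.prems(1) obtain Y j where
    Y: "park G n p (m+d) = Some Y" "Y j = 0" "Z = Y(j := Suc (m+d))" by auto
  have "X = (\<lambda>k. if Y k \<le> m then Y k else 0)" using Suc.IH[OF Y(1) Suc.prems(2)] .
  then show ?case using Y by (auto simp: fun_eq_iff)
qed

lemma park_not_None_mono:
  "park G n p m \<noteq> None \<Longrightarrow> m' \<le> m \<Longrightarrow> park G n p m' \<noteq> None"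
proof (induction m)
  case 0 then show ?case by simp
next
  case (Suc m)
  have "park G n p m \<noteq> None"
    using Suc.prems(1) park_Suc_Some[of G n p m] by fastforce
  then show ?case using Suc by (auto simp: le_Suc_eq)
qed




definition vv :: "nat \<Rightarrow> nat \<Rightarrow> nat \<Rightarrow> nat" where
  "vv n i k = (if k \<le> n - i + 1 then k + i - 1 else k + i - 1 - n)"
definition TT :: "nat \<Rightarrow> nat \<Rightarrow> nat \<Rightarrow> nat \<Rightarrow> nat" where
  "TT n i m k = (if 1 \<le> k \<and> k \<le> n \<and> vv n i k \<le> m then vv n i k else 0)"
definition PP :: "nat \<Rightarrow> nat \<Rightarrow> nat \<Rightarrow> nat" where
  "PP n i c = (if i \<le> c then c + 1 - i else n + 1 - i + c)"

definition goodp :: "nat \<Rightarrow> nat \<Rightarrow> (nat \<Rightarrow> nat \<Rightarrow> bool) \<Rightarrow> nat \<Rightarrow> nat \<Rightarrow> bool" where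
  "goodp n i G m q \<longleftrightarrow> q \<le> PP n i (Suc m) \<and> (\<forall>k. q \<le> k \<and> k < PP n i (Suc m) \<longrightarrow> \<not> available G n (TT n i m) (Suc m) k)"

context
  fixes n i :: nat
  assumes n3: "n \<ge> 3" and i1: "1 \<le> i" and iN: "i \<le> n"
begin

lemma v_range: "k \<in> {1..n} \<Longrightarrow> vv n i k \<in> {1..n}"
  using n3 i1 iN by (auto simp: vv_def)

lemma P_range: "c \<in> {1..n} \<Longrightarrow> PP n i c \<in> {1..n}"
  using n3 i1 iN by (auto simp: PP_def)

lemma v_P: "c \<in> {1..n} \<Longrightarrow> vv n i (PP n i c) = c"
  using n3 i1 iN by (auto simp: PP_def vv_def)

lemma v_inj: "k \<in> {1..n} \<Longrightarrow> vv n i k = c \<Longrightarrow> k = PP n i c"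
  using n3 i1 iN by (auto simp: PP_def vv_def split: if_splits)

lemma length_Inc: "length (Inc n i) = n"
  using i1 iN by (simp add: Inc_def)

lemma nth_Inc: "k < n \<Longrightarrow> Inc n i ! k = vv n i (Suc k)"
  using i1 iN by (auto simp: Inc_def vv_def nth_append)

lemma T_upd: "m < n \<Longrightarrow> (TT n i m)(PP n i (Suc m) := Suc m) = TT n i (Suc m)"
proof (rule ext)
  fix k assume m: "m < n"
  have c: "Suc m \<in> {1..n}" using m by auto
  show "((TT n i m)(PP n i (Suc m) := Suc m)) k = TT n i (Suc m) k"
  proof (cases "k = PP n i (Suc m)")
    case True
    then show ?thesis using P_range[OF c] v_P[OF c] by (auto simp: TT_def)
  next
    case False
    then have "k \<in> {1..n} \<Longrightarrow> vv n i k \<noteq> Suc m" using v_inj by blast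
    then show ?thesis using False by (auto simp: TT_def)
  qed
qed

lemma T_restrict: "m \<le> n \<Longrightarrow> TT n i m = (\<lambda>k. if TT n i n k \<le> m then TT n i n k else 0)"
  using v_range by (auto simp: TT_def fun_eq_iff)

lemma step:
  assumes m: "m < n" and pm: "park G n p m = Some (TT n i m)"
    and av: "available G n (TT n i m) (Suc m) (PP n i (Suc m))"
  shows "park G n p (Suc m) = Some (TT n i (Suc m)) \<longleftrightarrow>
    (p!m \<le> PP n i (Suc m) \<and> (\<forall>k. p!m \<le> k \<and> k < PP n i (Suc m) \<longrightarrow> \<not> available G n (TT n i m) (Suc m) k))"
    (is "?L \<longleftrightarrow> ?R")
proof
  assume R: ?R
  let ?P = "PP n i (Suc m)"
  have ex: "\<exists>k. p ! m \<le> k \<and> available G n (TT n i m) (Suc m) k" using R av by blast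
  have "(LEAST k. p ! m \<le> k \<and> available G n (TT n i m) (Suc m) k) = ?P"
  proof (rule Least_equality)
    show "p ! m \<le> ?P \<and> available G n (TT n i m) (Suc m) ?P" using R av by blast
  next
    fix y assume "p ! m \<le> y \<and> available G n (TT n i m) (Suc m) y"
    then show "?P \<le> y" using R by (meson not_le)
  qed
  then show ?L using pm ex T_upd[OF m] by simp
next
  assume L: ?L
  have ex: "\<exists>k. p ! m \<le> k \<and> available G n (TT n i m) (Suc m) k"
  proof (rule ccontr)
    assume "\<not> ?thesis" then have "park G n p (Suc m) = None" using pm by simp
    then show False using L by simp
  qed
  define Lk where "Lk = (LEAST k. p ! m \<le> k \<and> available G n (TT n i m) (Suc m) k)"
  have eq: "(TT n i m)(Lk := Suc m) = TT n i (Suc m)" using L pm ex unfolding Lk_def by simp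
  have "TT n i (Suc m) Lk = Suc m" using fun_cong[OF eq, of Lk] by simp
  then have "Lk \<in> {1..n}" "vv n i Lk = Suc m" by (auto simp: TT_def split: if_splits)
  then have LP: "Lk = PP n i (Suc m)" using v_inj by blast
  have "p ! m \<le> Lk" using LeastI_ex[OF ex] unfolding Lk_def by blast
  moreover have "\<forall>k. p!m \<le> k \<and> k < Lk \<longrightarrow> \<not> available G n (TT n i m) (Suc m) k"
    unfolding Lk_def using not_less_Least by blast
  ultimately show ?R using LP by simp
qed

lemma outcome_char:
  assumes av: "\<forall>m<n. available G n (TT n i m) (Suc m) (PP n i (Suc m))"
  shows "(park G n p n \<noteq> None \<and> outcome G n p = Inc n i) \<longleftrightarrow> (\<forall>m<n. goodp n i G m (p!m))"
proof
  assume H: "park G n p n \<noteq> None \<and> outcome G n p = Inc n i"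
  then obtain Z where Z: "park G n p n = Some Z" by blast
  have "Z = TT n i n"
  proof (rule ext)
    fix k
    show "Z k = TT n i n k"
    proof (cases "k \<in> {1..n}")
      case True
      then have "outcome G n p ! (k - 1) = Z k" using Z by (auto simp: outcome_def nth_map simp del: upt_Suc)
      moreover have "Inc n i ! (k - 1) = vv n i k" using nth_Inc[of "k-1"] True by auto
      ultimately show ?thesis using H True v_range by (auto simp: TT_def)
    next
      case False
      then show ?thesis using park_range[OF Z, of k] by (auto simp: TT_def)
    qed
  qed
  have all: "park G n p m = Some (TT n i m)" if mn: "m \<le> n" for m
  proof -
    obtain X where X: "park G n p m = Some X"
      using park_not_None_mono[of G n p n m] H mn by (cases "park G n p m") auto
    have "park G n p (m + (n - m)) = Some Z" using Z mn by simp
    from park_restrict[OF this X] have "X = (\<lambda>k. if Z k \<le> m then Z k else 0)" .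
    then have "X = TT n i m" using T_restrict[OF mn] \<open>Z = TT n i n\<close> by (simp only:)
    then show ?thesis using X by simp
  qed
  show "\<forall>m<n. goodp n i G m (p!m)"
  proof (intro allI impI)
    fix m assume m: "m < n"
    from step[OF m all[of m] ] av m all[of "Suc m"] show "goodp n i G m (p!m)"
      unfolding goodp_def by simp
  qed
next
  assume G: "\<forall>m<n. goodp n i G m (p!m)"
  have all: "m \<le> n \<Longrightarrow> park G n p m = Some (TT n i m)" for m
  proof (induction m)
    case 0 then show ?case by (simp add: TT_def fun_eq_iff)
  next
    case (Suc m)
    then have m: "m < n" by simp
    show ?case using step[OF m Suc.IH] m av G unfolding goodp_def by simp
  qed
  have Zn: "park G n p n = Some (TT n i n)" using all by simp
  have "map (TT n i n) [1..<n+1] = Inc n i"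
  proof (rule nth_equalityI)
    show "length (map (TT n i n) [1..<n+1]) = length (Inc n i)" using length_Inc by (simp del: upt_Suc)
  next
    fix k assume "k < length (map (TT n i n) [1..<n+1])"
    then have k: "k < n" by (simp del: upt_Suc)
    then show "map (TT n i n) [1..<n+1] ! k = Inc n i ! k"
      using nth_Inc[OF k] v_range[of "Suc k"] by (auto simp: TT_def nth_upt simp del: upt_Suc)
  qed
  then show "park G n p n \<noteq> None \<and> outcome G n p = Inc n i"
    using Zn by (simp add: outcome_def)
qed

end



lemma card_lists_prod:
  "card {p :: 'a list. length p = N \<and> (\<forall>m<N. p!m \<in> F m)} = (\<Prod>m<N. card (F m))"
proof (induction N)
  case 0
  have "{p :: 'a list. length p = 0 \<and> (\<forall>m<0. p!m \<in> F m)} = {[]}" by auto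
  then show ?case by simp
next
  case (Suc N)
  let ?S = "\<lambda>N. {p :: 'a list. length p = N \<and> (\<forall>m<N. p!m \<in> F m)}"
  have eq: "?S (Suc N) = (\<lambda>(xs,x). xs @ [x]) ` (?S N \<times> F N)"
  proof (intro set_eqI iffI)
    fix p assume p: "p \<in> ?S (Suc N)"
    then have "p \<noteq> []" by auto
    then obtain xs x where pe: "p = xs @ [x]" by (metis rev_exhaust)
    have "xs \<in> ?S N" using p pe by (auto simp: nth_append) (metis less_SucI)
    moreover have "x \<in> F N" using p pe by auto
    ultimately show "p \<in> (\<lambda>(xs,x). xs @ [x]) ` (?S N \<times> F N)" using pe by auto
  next
    fix p assume "p \<in> (\<lambda>(xs,x). xs @ [x]) ` (?S N \<times> F N)"
    then show "p \<in> ?S (Suc N)" by (auto simp: nth_append less_Suc_eq)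
  qed
  have inj: "inj_on (\<lambda>(xs,x). xs @ [x]) (?S N \<times> F N)"
    by (auto simp: inj_on_def)
  show ?case unfolding eq card_image[OF inj] card_cartesian_product Suc.IH by simp
qed




definition aa :: "nat \<Rightarrow> nat \<Rightarrow> nat \<Rightarrow> nat" where
  "aa n i c = (if i \<le> c then 1 else if c \<le> 2 then n + 2 - i else n + 1 - i)"

context
  fixes n i :: nat
  assumes n3: "n \<ge> 3" and i1: "1 \<le> i" and iN: "i \<le> n"
begin

lemma T_lo: "1 \<le> k \<Longrightarrow> k \<le> n - i + 1 \<Longrightarrow> TT n i m k = (if k + i - 1 \<le> m then k + i - 1 else 0)"
  using iN i1 by (simp add: TT_def vv_def)

lemma T_hi: "n - i + 1 < k \<Longrightarrow> k \<le> n \<Longrightarrow> TT n i m k = (if k + i - 1 - n \<le> m then k + i - 1 - n else 0)"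
  by (simp add: TT_def vv_def)

lemma T_out: "k = 0 \<or> n < k \<Longrightarrow> TT n i m k = 0"
  by (auto simp: TT_def)

lemma L1: assumes m: "m < n" shows "available (cyc n) n (TT n i m) (Suc m) (PP n i (Suc m))"
proof (cases "i \<le> Suc m")
  case True
  have P: "PP n i (Suc m) = Suc m + 1 - i" using True by (simp add: PP_def)
  have a: "TT n i m (Suc m + 1 - i) = 0" using True m iN by (subst T_lo) auto
  have b: "TT n i m (Suc m + 1 - i - 1) = 0 \<or> cyc n (Suc m) (TT n i m (Suc m + 1 - i - 1))"
  proof (cases "Suc m = i")
    case True then show ?thesis by (simp add: T_out)
  next
    case False
    then have "TT n i m (Suc m + 1 - i - 1) = m" using \<open>i \<le> Suc m\<close> m iN i1 by (subst T_lo) auto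
    then show ?thesis using False \<open>i \<le> Suc m\<close> m i1 by (simp add: cyc_def)
  qed
  have d: "TT n i m (Suc m + 1 - i + 1) = 0 \<or> cyc n (Suc m) (TT n i m (Suc m + 1 - i + 1))"
  proof (cases "Suc m < n")
    case True then show ?thesis using \<open>i \<le> Suc m\<close> iN by (subst T_lo) auto
  next
    case False
    then have mn: "Suc m = n" using m by simp
    show ?thesis
    proof (cases "i = 1")
      case True then show ?thesis using mn T_out[of "Suc n" m] by simp
    next
      case False
      then have "TT n i m (Suc m + 1 - i + 1) = 1" using mn i1 iN n3 by (subst T_hi) auto
      then show ?thesis using mn n3 by (simp add: cyc_def)
    qed
  qed
  show ?thesis unfolding available_def P using a b d True m iN i1 by auto
next
  case False
  have P: "PP n i (Suc m) = n + 1 - i + Suc m" using False by (simp add: PP_def)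
  have a: "TT n i m (n + 1 - i + Suc m) = 0" using False m iN by (subst T_hi) auto
  have b: "TT n i m (n + 1 - i + Suc m - 1) = 0 \<or> cyc n (Suc m) (TT n i m (n + 1 - i + Suc m - 1))"
  proof (cases "m = 0")
    case True then show ?thesis using iN n3 by (subst T_lo) auto
  next
    case False
    then have "TT n i m (n + 1 - i + Suc m - 1) = m" using \<open>\<not> i \<le> Suc m\<close> m iN i1 by (subst T_hi) auto
    then show ?thesis using False \<open>\<not> i \<le> Suc m\<close> m i1 by (simp add: cyc_def)
  qed
  have d: "TT n i m (n + 1 - i + Suc m + 1) = 0"
  proof (cases "Suc (Suc m) < i")
    case True then show ?thesis using iN by (subst T_hi) auto
  next
    case False then show ?thesis using \<open>\<not> i \<le> Suc m\<close> iN by (subst T_out) auto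
  qed
  show ?thesis unfolding available_def P using a b d False m iN i1 by auto
qed

lemma occ_na: "occ k \<noteq> 0 \<Longrightarrow> \<not> available G n occ c k"
  by (simp add: available_def)

lemma L2: assumes m: "m < n" and k: "aa n i (Suc m) \<le> k" "k < PP n i (Suc m)"
  shows "\<not> available (cyc n) n (TT n i m) (Suc m) k"
proof (cases "i \<le> Suc m")
  case True
  then have "1 \<le> k" "k \<le> Suc m - i" using k by (auto simp: aa_def PP_def)
  then have "TT n i m k \<noteq> 0" using True m iN i1 by (subst T_lo) auto
  then show ?thesis by (rule occ_na)
next
  case False
  then have kP: "k < n + 1 - i + Suc m" using k by (simp add: PP_def)
  show ?thesis
  proof (cases "n + 1 - i < k")
    case True
    then have "TT n i m k \<noteq> 0" using False kP iN i1 by (subst T_hi) auto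
    then show ?thesis by (rule occ_na)
  next
    case False2: False
    then have c3: "Suc m \<ge> 3" and kk: "k = n + 1 - i"
      using k \<open>\<not> i \<le> Suc m\<close> iN by (auto simp: aa_def split: if_splits)
    have "TT n i m (k + 1) = 1" using kk \<open>\<not> i \<le> Suc m\<close> iN c3 by (subst T_hi) auto
    moreover have "\<not> cyc n (Suc m) 1" using c3 \<open>\<not> i \<le> Suc m\<close> iN by (auto simp: cyc_def)
    ultimately show ?thesis by (simp add: available_def)
  qed
qed

lemma L3: assumes m: "m < n" and a: "1 < aa n i (Suc m)"
  shows "available (cyc n) n (TT n i m) (Suc m) (aa n i (Suc m) - 1)"
proof -
  have lt: "Suc m < i" using a by (auto simp: aa_def split: if_splits)
  consider "m = 0" | "m = 1" | "m \<ge> 2" by linarith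
  then show ?thesis
  proof cases
    case 1
    have z: "TT n i m = (\<lambda>_. 0)" using 1 v_range[OF n3 i1 iN] by (auto simp: TT_def fun_eq_iff)
    show ?thesis using 1 lt iN unfolding z by (auto simp: aa_def available_def)
  next
    case 2
    have A: "aa n i (Suc m) - 1 = n + 1 - i" using 2 lt by (simp add: aa_def)
    have x: "TT n i 1 (n + 1 - i) = 0" using iN n3 by (subst T_lo) auto
    have y: "TT n i 1 (n + 1 - i - 1) = 0"
    proof (cases "n + 1 - i - 1 = 0")
      case True then show ?thesis by (simp add: T_out)
    next
      case False then show ?thesis using iN n3 by (subst T_lo) auto
    qed
    have z: "TT n i 1 (n + 1 - i + 1) = 1" using iN lt 2 by (subst T_hi) auto
    have r: "1 \<le> n + 1 - i \<and> n + 1 - i \<le> n" using lt iN by linarith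
    show ?thesis unfolding A using x y z r 2 n3 by (simp add: available_def cyc_def)
  next
    case 3
    have A: "aa n i (Suc m) - 1 = n - i" using 3 lt by (simp add: aa_def)
    have ni: "1 \<le> n - i" using a A by simp
    have x: "TT n i m (n - i) = 0" using iN n3 lt ni by (subst T_lo) auto
    have y: "TT n i m (n - i - 1) = 0"
    proof (cases "n - i - 1 = 0")
      case True then show ?thesis by (simp add: T_out)
    next
      case False then show ?thesis using iN n3 lt by (subst T_lo) auto
    qed
    have z: "TT n i m (n - i + 1) = 0" using iN lt by (subst T_lo) auto
    show ?thesis unfolding A using x y z ni iN by (simp add: available_def)
  qed
qed

end



definition ff :: "nat \<Rightarrow> nat \<Rightarrow> nat" where
  "ff i c = (if i \<le> c then c + 1 - i else if c \<le> 2 then c else c + 1)"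

context
  fixes n i :: nat
  assumes n3: "n \<ge> 3" and i1: "1 \<le> i" and iN: "i \<le> n"
begin

lemma F_eq: assumes m: "m < n"
  shows "{q. 1 \<le> q \<and> goodp n i (cyc n) m q} = {aa n i (Suc m) .. PP n i (Suc m)}"
proof -
  have a1: "1 \<le> aa n i (Suc m)" using iN by (auto simp: aa_def)
  have aP: "aa n i (Suc m) \<le> PP n i (Suc m)" using iN by (auto simp: aa_def PP_def)
  show ?thesis
  proof (intro set_eqI iffI)
    fix q assume q: "q \<in> {q. 1 \<le> q \<and> goodp n i (cyc n) m q}"
    have "aa n i (Suc m) \<le> q"
    proof (rule ccontr)
      assume "\<not> ?thesis"
      then have "1 < aa n i (Suc m)" "q \<le> aa n i (Suc m) - 1" using q by auto
      then show False using q L3[OF n3 i1 iN m] aP unfolding goodp_def by auto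
    qed
    then show "q \<in> {aa n i (Suc m) .. PP n i (Suc m)}" using q by (auto simp: goodp_def)
  next
    fix q assume "q \<in> {aa n i (Suc m) .. PP n i (Suc m)}"
    then show "q \<in> {q. 1 \<le> q \<and> goodp n i (cyc n) m q}"
      using a1 L2[OF n3 i1 iN m] by (auto simp: goodp_def)
  qed
qed

lemma card_F: assumes m: "m < n"
  shows "card {q. 1 \<le> q \<and> goodp n i (cyc n) m q} = ff i (Suc m)"
  unfolding F_eq[OF m] using iN by (auto simp: aa_def PP_def ff_def)

lemma set_eq: "{p. is_friendship_pf (cyc n) n p \<and> outcome (cyc n) n p = Inc n i}
   = {p. length p = n \<and> (\<forall>m<n. p!m \<in> {q. 1 \<le> q \<and> goodp n i (cyc n) m q})}"
proof -
  have av: "\<forall>m<n. available (cyc n) n (TT n i m) (Suc m) (PP n i (Suc m))"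
    using L1[OF n3 i1 iN] by blast
  have le: "goodp n i (cyc n) m q \<Longrightarrow> m < n \<Longrightarrow> q \<le> n" for m q
    using P_range[OF n3 i1 iN, of "Suc m"] by (auto simp: goodp_def)
  show ?thesis
  proof (intro set_eqI iffI)
    fix p assume "p \<in> {p. is_friendship_pf (cyc n) n p \<and> outcome (cyc n) n p = Inc n i}"
    then have H: "length p = n" "set p \<subseteq> {1..n}" "park (cyc n) n p n \<noteq> None"
      "outcome (cyc n) n p = Inc n i" by (auto simp: is_friendship_pf_def)
    then have "\<forall>m<n. goodp n i (cyc n) m (p!m)" using outcome_char[OF n3 i1 iN av] by blast
    moreover have "\<forall>m<n. 1 \<le> p!m" using H(1,2) by (auto simp: set_conv_nth)
    ultimately show "p \<in> {p. length p = n \<and> (\<forall>m<n. p!m \<in> {q. 1 \<le> q \<and> goodp n i (cyc n) m q})}"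
      using H(1) by auto
  next
    fix p assume "p \<in> {p. length p = n \<and> (\<forall>m<n. p!m \<in> {q. 1 \<le> q \<and> goodp n i (cyc n) m q})}"
    then have H: "length p = n" "\<forall>m<n. 1 \<le> p!m \<and> goodp n i (cyc n) m (p!m)" by auto
    then have "park (cyc n) n p n \<noteq> None \<and> outcome (cyc n) n p = Inc n i"
      using outcome_char[OF n3 i1 iN av] by blast
    moreover have "set p \<subseteq> {1..n}" using H le by (auto simp: set_conv_nth)
    ultimately show "p \<in> {p. is_friendship_pf (cyc n) n p \<and> outcome (cyc n) n p = Inc n i}"
      using H(1) by (auto simp: is_friendship_pf_def)
  qed
qed

lemma count: "card {p. is_friendship_pf (cyc n) n p \<and> outcome (cyc n) n p = Inc n i}
   = (\<Prod>m<n. ff i (Suc m))"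
  unfolding set_eq card_lists_prod using card_F by simp

end



lemma g_a: "N < i \<Longrightarrow> N \<le> 2 \<Longrightarrow> (\<Prod>m<N. ff i (Suc m)) = fact N"
proof (induction N)
  case 0 then show ?case by simp
next
  case (Suc N)
  then show ?case by (simp add: ff_def)
qed

lemma g_b: "2 \<le> N \<Longrightarrow> N < i \<Longrightarrow> 3 * (\<Prod>m<N. ff i (Suc m)) = fact (N + 1)"
proof (induction N rule: dec_induct)
  case base
  have "(\<Prod>m<2. ff i (Suc m)) = 2" using base by (simp add: ff_def numeral_2_eq_2)
  then show ?case by (simp add: fact_numeral)
next
  case (step N)
  have "3 * (\<Prod>m<Suc N. ff i (Suc m)) = 3 * (\<Prod>m<N. ff i (Suc m)) * ff i (Suc N)" by simp
  also have "\<dots> = fact (N + 1) * (N + 2)" using step by (simp add: ff_def)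
  also have "\<dots> = fact (Suc N + 1)" by (simp add: algebra_simps)
  finally show ?case .
qed

lemma g_c: "i - 1 \<le> N \<Longrightarrow> 1 \<le> i \<Longrightarrow> (\<Prod>m<N. ff i (Suc m)) = (\<Prod>m<i-1. ff i (Suc m)) * fact (N + 1 - i)"
proof (induction N rule: dec_induct)
  case base then show ?case by simp
next
  case (step N)
  have "(\<Prod>m<Suc N. ff i (Suc m)) = (\<Prod>m<N. ff i (Suc m)) * ff i (Suc N)" by simp
  also have "\<dots> = (\<Prod>m<i-1. ff i (Suc m)) * (fact (N + 1 - i) * (N + 2 - i))"
    using step by (simp add: ff_def)
  also have "fact (N + 1 - i) * (N + 2 - i) = fact (Suc N + 1 - i)"
    using step by (simp add: Suc_diff_le fact_Suc algebra_simps)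
  finally show ?case .
qed




context
  fixes n i :: nat
  assumes n3: "n \<ge> 3" and i1: "1 \<le> i" and iN: "i \<le> n"
begin

lemma nthI: "k < n \<Longrightarrow> Inc n i ! k = (if k \<le> n - i then k + i else k + i - n)"
  using nth_Inc[OF n3 i1 iN] iN i1 by (auto simp: vv_def)

lemma q_eq: assumes j: "j \<in> {1..n}"
  shows "{k. k < length (Inc n i) \<and> Inc n i ! k = j} = {PP n i j - 1}"
proof -
  have "k < n \<and> Inc n i ! k = j \<longleftrightarrow> k = PP n i j - 1" for k
  proof
    assume "k < n \<and> Inc n i ! k = j"
    then have "vv n i (Suc k) = j" "Suc k \<in> {1..n}" using nth_Inc[OF n3 i1 iN] by auto
    then show "k = PP n i j - 1" using v_inj[OF n3 i1 iN] by force
  next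
    assume k: "k = PP n i j - 1"
    have "PP n i j \<in> {1..n}" using P_range[OF n3 i1 iN j] .
    then show "k < n \<and> Inc n i ! k = j" using k nth_Inc[OF n3 i1 iN, of k] v_P[OF n3 i1 iN j] by auto
  qed
  then show ?thesis using length_Inc[OF n3 i1 iN] by auto
qed

definition MM :: "nat \<Rightarrow> nat" where
  "MM j = (if i \<le> j then 0 else if 3 \<le> j then n - i else n - i + 1)"

lemma nthI': "k < n \<Longrightarrow> k \<le> n - i \<Longrightarrow> Inc n i ! k = k + i"
  using nthI by simp
lemma nthI'': "k < n \<Longrightarrow> n - i < k \<Longrightarrow> Inc n i ! k = k + i - n"
  using nthI by simp

lemma B1: assumes j: "j \<in> {1..n}" and k: "MM j \<le> k" "k \<le> PP n i j - 1"
  shows "is_blocker (cyc n) (Inc n i) j k"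
proof (cases "i \<le> j")
  case True
  then have kj: "k \<le> j - i" using k by (simp add: PP_def)
  then have kn: "k < n" "k \<le> n - i" using j iN i1 by auto
  have "Inc n i ! k \<le> j" using nthI'[OF kn] kj True by simp
  then show ?thesis using kn length_Inc[OF n3 i1 iN] by (simp add: is_blocker_def)
next
  case False
  then have kq: "k \<le> n - i + j" using k iN by (simp add: PP_def)
  show ?thesis
  proof (cases "n - i < k")
    case True
    have kn: "k < n" using kq False iN by linarith
    have "Inc n i ! k \<le> j" using nthI''[OF kn True] kq iN by simp
    then show ?thesis using kn length_Inc[OF n3 i1 iN] by (simp add: is_blocker_def)
  next
    case False2: False
    then have j3: "3 \<le> j" and kk: "k = n - i" using k False by (auto simp: MM_def split: if_splits)
    have kn: "k < n" "k \<le> n - i" using kk i1 iN by auto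
    have kn1: "k + 1 < n" "n - i < k + 1" using kk False j3 iN by auto
    have a: "Inc n i ! k = n" using nthI'[OF kn] kk iN by simp
    have b: "Inc n i ! (k + 1) = 1" using nthI''[OF kn1] kk iN by simp
    have c: "\<not> cyc n j 1" using j3 False iN by (auto simp: cyc_def)
    have "j < n" using False iN by simp
    then show ?thesis using a b c kn1 length_Inc[OF n3 i1 iN] j3
      by (simp add: is_blocker_def)
  qed
qed

lemma B2: assumes j: "j \<in> {1..n}" and M: "0 < MM j"
  shows "MM j - 1 \<le> PP n i j - 1 \<and> \<not> is_blocker (cyc n) (Inc n i) j (MM j - 1)"
proof -
  have ji: "j < i" using M by (auto simp: MM_def split: if_splits)
  have P: "PP n i j = n + 1 - i + j" using ji by (simp add: PP_def)
  show ?thesis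
  proof (cases "3 \<le> j")
    case True
    then have Mk: "MM j - 1 = n - i - 1" and ni: "1 \<le> n - i" using ji M by (auto simp: MM_def)
    define k where "k = n - i - 1"
    have kn: "k < n" "k \<le> n - i" using ni unfolding k_def by auto
    have a: "Inc n i ! k = n - 1" using nthI'[OF kn] ni iN unfolding k_def by simp
    have kn1: "k + 1 < n" "k + 1 \<le> n - i" using ni i1 unfolding k_def by auto
    have b: "Inc n i ! (k + 1) = n" using nthI'[OF kn1] ni iN unfolding k_def by simp
    have c: "0 < k \<Longrightarrow> Inc n i ! (k - 1) = n - 2"
    proof -
      assume "0 < k"
      then have "k - 1 < n" "k - 1 \<le> n - i" using kn by auto
      from nthI'[OF this] show ?thesis using \<open>0 < k\<close> unfolding k_def by simp
    qed
    have jn: "j \<le> n - 2" using ji ni by linarith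
    have "\<not> is_blocker (cyc n) (Inc n i) j k"
      using a b c jn True unfolding is_blocker_def by (cases "k = 0") auto
    then show ?thesis unfolding Mk P k_def using ji by simp
  next
    case False
    then have Mk: "MM j - 1 = n - i" using ji by (auto simp: MM_def)
    define k where "k = n - i"
    have kn: "k < n" "k \<le> n - i" using i1 iN unfolding k_def by auto
    have a: "Inc n i ! k = n" using nthI'[OF kn] iN unfolding k_def by simp
    have kn1: "k + 1 < n" "n - i < k + 1" using ji j iN unfolding k_def by auto
    have b: "Inc n i ! (k + 1) = 1" using nthI''[OF kn1] iN unfolding k_def by simp
    have c: "0 < k \<Longrightarrow> Inc n i ! (k - 1) = n - 1"
    proof -
      assume "0 < k"
      then have "k - 1 < n" "k - 1 \<le> n - i" using kn by auto
      from nthI'[OF this] show ?thesis using \<open>0 < k\<close> iN unfolding k_def by simp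
    qed
    have d: "j = 2 \<Longrightarrow> cyc n j 1" using n3 by (simp add: cyc_def)
    have j2: "j \<le> 2" using False by simp
    have "\<not> is_blocker (cyc n) (Inc n i) j k"
      using a b c d j2 n3 j unfolding is_blocker_def by (cases "k = 0"; cases "j = 2") auto
    then show ?thesis unfolding Mk P k_def using ji by simp
  qed
qed

lemma bseq: assumes j: "j \<in> {1..n}"
  shows "blocking_seq j (Inc n i) (cyc n) =
    (if i \<le> j then [i..<j+1] else if 3 \<le> j then n # [1..<j+1] else [1..<j+1])"
proof -
  have q: "the_elem {k. k < length (Inc n i) \<and> Inc n i ! k = j} = PP n i j - 1"
    using q_eq[OF j] by simp
  have L: "(LEAST m. \<forall>k. m \<le> k \<and> k \<le> PP n i j - 1 \<longrightarrow> is_blocker (cyc n) (Inc n i) j k) = MM j"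
  proof (rule Least_equality)
    show "\<forall>k. MM j \<le> k \<and> k \<le> PP n i j - 1 \<longrightarrow> is_blocker (cyc n) (Inc n i) j k"
      using B1[OF j] by blast
  next
    fix y assume y: "\<forall>k. y \<le> k \<and> k \<le> PP n i j - 1 \<longrightarrow> is_blocker (cyc n) (Inc n i) j k"
    show "MM j \<le> y"
    proof (rule ccontr)
      assume "\<not> MM j \<le> y"
      then have "0 < MM j" "y \<le> MM j - 1" by auto
      then show False using B2[OF j] y by blast
    qed
  qed
  have res: "drop (MM j) (take (PP n i j - 1 + 1) (Inc n i)) =
    (if i \<le> j then [i..<j+1] else if 3 \<le> j then n # [1..<j+1] else [1..<j+1])"
  proof (cases "i \<le> j")
    case True
    then have "PP n i j - 1 + 1 = j + 1 - i" "j + 1 - i \<le> length [i..<n+1]" using j iN by (auto simp: PP_def)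
    then show ?thesis using True j iN by (simp add: MM_def Inc_def take_append take_upt del: upt_Suc)
  next
    case False
    have t: "take (PP n i j - 1 + 1) (Inc n i) = [i..<n+1] @ [1..<j+1]"
      using False j iN by (simp add: PP_def Inc_def take_append take_upt del: upt_Suc)
    show ?thesis using False j iN i1 unfolding t
      by (auto simp: MM_def drop_append upt_rec[of i])
  qed
  show ?thesis unfolding blocking_seq_def Let_def q L res ..
qed

end


theorem proposition2p9:
  fixes n i :: nat
  assumes "n \<ge> 3" and "i \<in> {1..n}"
  shows
   "(4 \<le> i \<longrightarrow>
      (\<forall>j\<in>{1..n}. blocking_seq j (Inc n i) (cyc n) =
          (if i \<le> j then [i..<j+1]
           else if 3 \<le> j then n # [1..<j+1]
           else if j = 2 then [1, 2] else [1])) \<and>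
      (of_nat (card {p. is_friendship_pf (cyc n) n p \<and> outcome (cyc n) n p = Inc n i}) :: real)
        = of_nat (fact (n - i + 1) * fact i) / 3)
    \<and>
    (i \<le> 3 \<longrightarrow>
      (\<forall>j\<in>{1..n}. blocking_seq j (Inc n i) (cyc n) =
          (if i \<le> j then [i..<j+1] else [1..<j+1])) \<and>
      card {p. is_friendship_pf (cyc n) n p \<and> outcome (cyc n) n p = Inc n i}
        = fact (n + 1 - i) * fact (i - 1))"
proof -
  have n3: "n \<ge> 3" and i1: "1 \<le> i" and iN: "i \<le> n" using assms by auto
  have bs: "\<And>j. j \<in> {1..n} \<Longrightarrow> blocking_seq j (Inc n i) (cyc n) =
    (if i \<le> j then [i..<j+1] else if 3 \<le> j then n # [1..<j+1] else [1..<j+1])"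
    using bseq[OF n3 i1 iN] by blast
  have cnt: "card {p. is_friendship_pf (cyc n) n p \<and> outcome (cyc n) n p = Inc n i}
      = (\<Prod>m<i-1. ff i (Suc m)) * fact (n + 1 - i)"
    using count[OF n3 i1 iN] g_c[of i n] i1 iN by simp
  have part1: "4 \<le> i \<longrightarrow>
      (\<forall>j\<in>{1..n}. blocking_seq j (Inc n i) (cyc n) =
          (if i \<le> j then [i..<j+1]
           else if 3 \<le> j then n # [1..<j+1]
           else if j = 2 then [1, 2] else [1])) \<and>
      (of_nat (card {p. is_friendship_pf (cyc n) n p \<and> outcome (cyc n) n p = Inc n i}) :: real)
        = of_nat (fact (n - i + 1) * fact i) / 3"
  proof
    assume i4: "4 \<le> i"
    have A: "\<forall>j\<in>{1..n}. blocking_seq j (Inc n i) (cyc n) =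
          (if i \<le> j then [i..<j+1]
           else if 3 \<le> j then n # [1..<j+1]
           else if j = 2 then [1, 2] else [1])"
    proof
      fix j assume j: "j \<in> {1..n}"
      have "[1..<j+1] = (if j = 2 then [1, 2] else [1])" if "j \<le> 2"
        using that j by (cases "j = 2") (auto simp: numeral_2_eq_2 upt_rec)
      then show "blocking_seq j (Inc n i) (cyc n) =
          (if i \<le> j then [i..<j+1]
           else if 3 \<le> j then n # [1..<j+1]
           else if j = 2 then [1, 2] else [1])" using bs[OF j] by auto
    qed
    have g3: "3 * (\<Prod>m<i-1. ff i (Suc m)) = fact i"
      using g_b[of "i - 1" i] i4 by simp
    have e: "n - i + 1 = n + 1 - i" using iN by simp
    have "(of_nat (card {p. is_friendship_pf (cyc n) n p \<and> outcome (cyc n) n p = Inc n i}) :: real)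
        = of_nat ((\<Prod>m<i-1. ff i (Suc m)) * fact (n + 1 - i))" using cnt by simp
    also have "\<dots> = of_nat (fact (n - i + 1) * (3 * (\<Prod>m<i-1. ff i (Suc m)))) / 3"
      unfolding e by simp
    also have "\<dots> = of_nat (fact (n - i + 1) * fact i) / 3" unfolding g3 ..
    finally have C: "(of_nat (card {p. is_friendship_pf (cyc n) n p \<and> outcome (cyc n) n p = Inc n i}) :: real)
        = of_nat (fact (n - i + 1) * fact i) / 3" .
    show "(\<forall>j\<in>{1..n}. blocking_seq j (Inc n i) (cyc n) =
          (if i \<le> j then [i..<j+1]
           else if 3 \<le> j then n # [1..<j+1]
           else if j = 2 then [1, 2] else [1])) \<and>
      (of_nat (card {p. is_friendship_pf (cyc n) n p \<and> outcome (cyc n) n p = Inc n i}) :: real)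
        = of_nat (fact (n - i + 1) * fact i) / 3" using A C by blast
  qed
  have part2: "i \<le> 3 \<longrightarrow>
      (\<forall>j\<in>{1..n}. blocking_seq j (Inc n i) (cyc n) =
          (if i \<le> j then [i..<j+1] else [1..<j+1])) \<and>
      card {p. is_friendship_pf (cyc n) n p \<and> outcome (cyc n) n p = Inc n i}
        = fact (n + 1 - i) * fact (i - 1)"
  proof
    assume i3: "i \<le> 3"
    have "(\<Prod>m<i-1. ff i (Suc m)) = fact (i - 1)" using g_a[of "i - 1" i] i3 i1 by simp
    then show "(\<forall>j\<in>{1..n}. blocking_seq j (Inc n i) (cyc n) =
          (if i \<le> j then [i..<j+1] else [1..<j+1])) \<and>
      card {p. is_friendship_pf (cyc n) n p \<and> outcome (cyc n) n p = Inc n i}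
        = fact (n + 1 - i) * fact (i - 1)" using bs cnt i3 by (auto simp: mult.commute)
  qed
  show ?thesis using part1 part2 by blast
qed

end
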